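(* Let $w=(w_n)$ be any bounded sequence of positive real numbers. The unilateral weighted backward shift $B_w:\ell^\infty(\mathbb N)\to\ell^\infty(\mathbb N)$, $(B_wx)_n=w_n x_{n+1}$ ($n\in\mathbb N$), is not recurrent; and for a bounded sequence of positive reals $w=(w_n)_{n\in\mathbb Z}$, the bilateral weighted backward shift $B_w:\ell^\infty(\mathbb Z)\to\ell^\infty(\mathbb Z)$, $(B_wx)_n=w_n x_{n+1}$ ($n\in\mathbb Z$), is not recurrent.
   Context: $\ell^\infty(\mathbb N)$, $\ell^\infty(\mathbb Z)$ are the Banach spaces of bounded complex sequences with the supremum norm. An operator $T$ on a Banach space $X$ is recurrent if for every non-empty open $U\subset X$ there is a positive integer $k$ with $U\cap T^{-k}(U)\neq\emptyset$. *)

theory Defs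
  imports "HOL-Analysis.Analysis"
begin

(* ell^infinity(N) is modelled as nat =>C complex and ell^infinity(Z) as int =>C complex
   (bounded continuous functions on a discrete space, sup norm). *)

definition recurrent :: "('a::topological_space \<Rightarrow> 'a) \<Rightarrow> bool" where
  "recurrent T \<longleftrightarrow>
     (\<forall>U. open U \<and> U \<noteq> {} \<longrightarrow> (\<exists>k::nat. k > 0 \<and> U \<inter> (T ^^ k) -` U \<noteq> {}))"

end

theory Submission
  imports Defs
begin

lemma iter_form:
  fixes B :: "('a::topological_space \<Rightarrow>\<^sub>C complex) \<Rightarrow> ('a \<Rightarrow>\<^sub>C complex)"
    and s :: "'a \<Rightarrow> 'a" and w :: "'a \<Rightarrow> real"
  assumes wpos: "\<forall>n. w n > 0"
    and Bdef: "\<forall>x n. apply_bcontfun (B x) n = complex_of_real (w n) * apply_bcontfun x (s n)"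
  shows "\<forall>n. \<exists>c>0. apply_bcontfun ((B ^^ k) y) n = complex_of_real c * apply_bcontfun y ((s ^^ k) n)"
proof (induction k)
  case 0
  show ?case by (intro allI exI[of _ 1]) simp
next
  case (Suc k)
  show ?case
  proof
    fix n
    obtain c where c: "c > 0" "apply_bcontfun ((B ^^ k) y) (s n) = complex_of_real c * apply_bcontfun y ((s ^^ k) (s n))"
      using Suc by blast
    have "apply_bcontfun ((B ^^ Suc k) y) n = complex_of_real (w n * c) * apply_bcontfun y ((s ^^ Suc k) n)"
    proof -
      have e1: "(B ^^ Suc k) y = B ((B ^^ k) y)" by simp
      have e2: "(s ^^ Suc k) n = (s ^^ k) (s n)" by (simp only: funpow_Suc_right comp_def)
      show ?thesis unfolding e1 e2 using Bdef c by simp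
    qed
    moreover have "w n * c > 0" using wpos c by simp
    ultimately show "\<exists>c>0. apply_bcontfun ((B ^^ Suc k) y) n = complex_of_real c * apply_bcontfun y ((s ^^ Suc k) n)"
      by blast
  qed
qed

lemma key:
  fixes B :: "('a::topological_space \<Rightarrow>\<^sub>C complex) \<Rightarrow> ('a \<Rightarrow>\<^sub>C complex)"
    and s :: "'a \<Rightarrow> 'a" and w :: "'a \<Rightarrow> real" and x :: "'a \<Rightarrow>\<^sub>C complex"
  assumes wpos: "\<forall>n. w n > 0"
    and Bdef: "\<forall>x n. apply_bcontfun (B x) n = complex_of_real (w n) * apply_bcontfun x (s n)"
    and xp: "Re (apply_bcontfun x p) = 1"
    and xk: "\<And>k. k > 0 \<Longrightarrow> Re (apply_bcontfun x ((s ^^ k) p)) = -1"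
  shows "\<not> recurrent B"
proof
  assume "recurrent B"
  then obtain k :: nat where k: "k > 0" "ball x (1/2) \<inter> (B ^^ k) -` ball x (1/2) \<noteq> {}"
    unfolding recurrent_def by (metis centre_in_ball empty_iff open_ball half_gt_zero zero_less_one)
  then obtain y where y1: "dist x y < 1/2" and y2: "dist x ((B ^^ k) y) < 1/2" by auto
  obtain c where c: "c > 0" "apply_bcontfun ((B ^^ k) y) p = complex_of_real c * apply_bcontfun y ((s ^^ k) p)"
    using iter_form[OF wpos Bdef, of k y] by blast
  let ?q = "(s ^^ k) p"
  have "dist (apply_bcontfun x ?q) (apply_bcontfun y ?q) < 1/2"
    using dist_bounded[of x ?q y] y1 by linarith
  hence "\<bar>Re (apply_bcontfun x ?q) - Re (apply_bcontfun y ?q)\<bar> < 1/2"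
    by (metis abs_Re_le_cmod dist_norm minus_complex.simps(1) order.strict_trans1)
  hence yq: "Re (apply_bcontfun y ?q) < 0" using xk[OF k(1)] by linarith
  have "dist (apply_bcontfun x p) (apply_bcontfun ((B ^^ k) y) p) < 1/2"
    using dist_bounded[of x p "(B ^^ k) y"] y2 by linarith
  hence "\<bar>Re (apply_bcontfun x p) - Re (apply_bcontfun ((B ^^ k) y) p)\<bar> < 1/2"
    by (metis abs_Re_le_cmod dist_norm minus_complex.simps(1) order.strict_trans1)
  hence "Re (apply_bcontfun ((B ^^ k) y) p) > 0" using xp by linarith
  moreover have "Re (apply_bcontfun ((B ^^ k) y) p) = c * Re (apply_bcontfun y ?q)"
    using c by simp
  moreover have "c * Re (apply_bcontfun y ?q) < 0" using c(1) yq by (simp add: mult_pos_neg)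
  ultimately show False by linarith
qed

definition fx :: "'a::{zero,discrete_topology} \<Rightarrow> complex" where
  "fx n = (if n = 0 then 1 else -1)"

lemma fx_in: "fx \<in> bcontfun"
proof -
  have "range fx \<subseteq> {1, -1}" by (auto simp: fx_def)
  hence "bounded (range fx)" by (meson bounded_subset finite.emptyI finite_imp_bounded finite_insert)
  thus ?thesis by (simp add: bcontfun_def continuous_on_discrete)
qed

lemma suc_iter_nat: "((Suc ^^ k) (0::nat)) = k"
  by (induction k) auto

lemma suc_iter_int: "(((\<lambda>n::int. n + 1) ^^ k) 0) = int k"
  by (induction k) auto

theorem theorem5p1:
  shows "(\<forall>(w :: nat \<Rightarrow> real) (B :: (nat \<Rightarrow>\<^sub>C complex) \<Rightarrow> (nat \<Rightarrow>\<^sub>C complex)).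
            (\<forall>n. w n > 0) \<and> bounded (range w) \<and>
            (\<forall>x n. apply_bcontfun (B x) n = complex_of_real (w n) * apply_bcontfun x (Suc n))
            \<longrightarrow> \<not> recurrent B)
       \<and> (\<forall>(w :: int \<Rightarrow> real) (B :: (int \<Rightarrow>\<^sub>C complex) \<Rightarrow> (int \<Rightarrow>\<^sub>C complex)).
            (\<forall>n. w n > 0) \<and> bounded (range w) \<and>
            (\<forall>x n. apply_bcontfun (B x) n = complex_of_real (w n) * apply_bcontfun x (n + 1))
            \<longrightarrow> \<not> recurrent B)"
proof (intro conjI allI impI)
  fix w :: "nat \<Rightarrow> real" and B :: "(nat \<Rightarrow>\<^sub>C complex) \<Rightarrow> (nat \<Rightarrow>\<^sub>C complex)"
  assume a: "(\<forall>n. w n > 0) \<and> bounded (range w) \<and>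
            (\<forall>x n. apply_bcontfun (B x) n = complex_of_real (w n) * apply_bcontfun x (Suc n))"
  have ap: "apply_bcontfun (Bcontfun (fx::nat\<Rightarrow>complex)) = fx" using fx_in by (rule Bcontfun_inverse)
  show "\<not> recurrent B"
    by (rule key[where s=Suc and w=w and x="Bcontfun fx" and p=0])
       (use a in \<open>auto simp: ap fx_def suc_iter_nat\<close>)
next
  fix w :: "int \<Rightarrow> real" and B :: "(int \<Rightarrow>\<^sub>C complex) \<Rightarrow> (int \<Rightarrow>\<^sub>C complex)"
  assume a: "(\<forall>n. w n > 0) \<and> bounded (range w) \<and>
            (\<forall>x n. apply_bcontfun (B x) n = complex_of_real (w n) * apply_bcontfun x (n + 1))"
  have ap: "apply_bcontfun (Bcontfun (fx::int\<Rightarrow>complex)) = fx" using fx_in by (rule Bcontfun_inverse)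
  show "\<not> recurrent B"
    by (rule key[where s="\<lambda>n. n + 1" and w=w and x="Bcontfun fx" and p=0])
       (use a in \<open>auto simp: ap fx_def suc_iter_int\<close>)
qed

end
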